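(* Let $d\ge1$ and $q\ge2$ even. There is no function $G:[0,\infty)\to\mathbb{R}$ satisfying $B_{d,0}(G)=b_d^{-1}$, $B_{d,i}(G)=0$ for $i\in\{2,4,\ldots,q-2\}$, $B_{d,q}(G)\neq0$, that minimizes $B_{d,q}(G)^{2(d+2)}\cdot V_{d,1}(G)^{2q}$ among all functions satisfying these moment conditions; i.e., this minimization problem has no solution.
   Context: For $G:[0,\infty)\to\mathbb{R}$: $B_{d,i}(G)=\int_0^\infty x^{d-1+i}G(x)\,dx$, $V_{d,1}(G)=\int_0^\infty x^{d-1}\{G^{(1)}(x)\}^2dx$, and $b_d=2\pi^{d/2}/\Gamma(d/2)$. *)

theory Defs
  imports "HOL-Analysis.Analysis"
begin

definition Bmom :: "nat \<Rightarrow> nat \<Rightarrow> (real \<Rightarrow> real) \<Rightarrow> real" where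
  "Bmom d i G = (LINT x:{0..}|lborel. x ^ (d - 1 + i) * G x)"

definition Vfun :: "nat \<Rightarrow> (real \<Rightarrow> real) \<Rightarrow> real" where
  "Vfun d G = (LINT x:{0..}|lborel. x ^ (d - 1) * (deriv G x)\<^sup>2)"

text \<open>b_d = 2 pi^(d/2) / Gamma(d/2), the surface area of the unit sphere in R^d.\<close>
definition bconst :: "nat \<Rightarrow> real" where
  "bconst d = 2 * pi powr (real d / 2) / Gamma (real d / 2)"

definition admissible :: "nat \<Rightarrow> nat \<Rightarrow> (real \<Rightarrow> real) \<Rightarrow> bool" where
  "admissible d q G \<longleftrightarrow>
     (\<forall>x>0. G differentiable (at x)) \<and>
     set_integrable lborel {0..} (\<lambda>x. x ^ (d - 1) * (deriv G x)\<^sup>2) \<and>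
     (\<forall>i\<le>q. even i \<longrightarrow> set_integrable lborel {0..} (\<lambda>x. x ^ (d - 1 + i) * G x)) \<and>
     Bmom d 0 G = 1 / bconst d \<and>
     (\<forall>i. even i \<and> 2 \<le> i \<and> i \<le> q - 2 \<longrightarrow> Bmom d i G = 0) \<and>
     Bmom d q G \<noteq> 0"

definition objective :: "nat \<Rightarrow> nat \<Rightarrow> (real \<Rightarrow> real) \<Rightarrow> real" where
  "objective d q G = Bmom d q G ^ (2 * (d + 2)) * Vfun d G ^ (2 * q)"

end

theory Submission
  imports Defs
begin

lemma deriv_meas:
  fixes G :: "real \<Rightarrow> real"
  assumes dG: "\<forall>x>0. G differentiable (at x)"
  shows "(\<lambda>x. indicator {0<..} x * deriv G x) \<in> borel_measurable borel"
proof (rule borel_measurable_LIMSEQ_real)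
  define u where "u = (\<lambda>n::nat. \<lambda>x. indicator {0<..} x *\<^sub>R ((G (x + 1/real (Suc n)) - G x) / (1/real (Suc n))))"
  show "u n \<in> borel_measurable borel" for n
    unfolding u_def
  proof (rule borel_measurable_continuous_on_indicator)
    show "{0::real<..} \<in> sets borel" by simp
    have "continuous_on {0<..} G"
      using dG by (meson continuous_at_imp_continuous_on differentiable_imp_continuous_within greaterThan_iff)
    moreover have "continuous_on {0<..} (\<lambda>x. G (x + 1/real (Suc n)))"
    proof (rule continuous_on_compose2[OF \<open>continuous_on {0<..} G\<close>])
      show "continuous_on {0<..} (\<lambda>x::real. x + 1/real (Suc n))" by (intro continuous_intros)
      show "(\<lambda>x::real. x + 1/real (Suc n)) ` {0<..} \<subseteq> {0<..}" by (auto intro!: add_pos_pos)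
    qed
    ultimately show "continuous_on {0<..} (\<lambda>x. (G (x + 1/real (Suc n)) - G x) / (1/real (Suc n)))"
      by (intro continuous_intros) auto
  qed
  fix x :: real
  show "(\<lambda>n. u n x) \<longlonglongrightarrow> indicator {0<..} x * deriv G x"
  proof (cases "x > 0")
    case False
    then show ?thesis by (simp add: u_def)
  next
    case True
    have "(G has_field_derivative deriv G x) (at x)"
      using dG True DERIV_deriv_iff_real_differentiable by blast
    then have lim: "((\<lambda>h. (G (x + h) - G x) / h) \<longlongrightarrow> deriv G x) (at 0)"
      by (simp add: DERIV_def)
    have "filterlim (\<lambda>n. 1/real (Suc n)) (at 0) sequentially"
      unfolding filterlim_at
      by (auto intro: LIMSEQ_Suc[OF lim_inverse_n'] simp del: of_nat_Suc)
    from filterlim_compose[OF lim this] True show ?thesis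
      by (simp add: u_def o_def)
  qed
qed

lemma lborel_Ici_inf: "emeasure lborel {1::real..} = \<infinity>"
proof (rule ccontr)
  assume "emeasure lborel {1::real..} \<noteq> \<infinity>"
  then obtain r where r: "emeasure lborel {1::real..} = ennreal r" "r \<ge> 0"
    by (metis ennreal_cases infinity_ennreal_def)
  obtain n :: nat where n: "r < real n" using reals_Archimedean2 by blast
  have "emeasure lborel {1::real..1 + real n} \<le> emeasure lborel {1::real..}"
    by (rule emeasure_mono) auto
  then have "ennreal (real n) \<le> ennreal r" using r by simp
  then show False using n r by (simp add: ennreal_le_iff)
qed

lemma const_not_int:
  fixes c :: real
  assumes "c \<noteq> 0" "set_integrable lborel {1..} (\<lambda>x::real. c)"
  shows False
proof -
  have "integrable lborel (\<lambda>x::real. indicator {1..} x * c / c)"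
    using assms(2) unfolding set_integrable_def by (intro integrable_divide) simp
  then have "integrable lborel (indicator {1::real..} :: real \<Rightarrow> real)"
    using assms(1) by simp
  then show False using lborel_Ici_inf by (simp add: integrable_indicator_iff)
qed

lemma open_closed_int:
  fixes f :: "real \<Rightarrow> real"
  shows "set_integrable lborel {0..} f \<longleftrightarrow> set_integrable lborel {0<..} f"
    and "(LINT x:{0..}|lborel. f x) = (LINT x:{0<..}|lborel. f x)"
  by (rule set_integrable_discrete_difference[where X="{0}"]; auto)
     (rule set_integral_discrete_difference[where X="{0}"]; auto)

lemma scale2:
  fixes F :: "real \<Rightarrow> real" and k :: nat
  assumes "set_integrable lborel {0<..} (\<lambda>x. x ^ k * F x)"
  shows "set_integrable lborel {0<..} (\<lambda>x. x ^ k * F (2 * x))"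
    and "(LINT x:{0<..}|lborel. x ^ k * F (2 * x)) = (LINT x:{0<..}|lborel. x ^ k * F x) / 2 ^ (k + 1)"
proof -
  define f where "f = (\<lambda>x::real. indicator {0<..} x * (x ^ k * F x))"
  have fi: "integrable lborel f" using assms unfolding f_def set_integrable_def by simp
  have eq: "f (0 + 2 * x) = 2 ^ k * (indicator {0<..} x * (x ^ k * F (2 * x)))" for x
    by (simp add: f_def indicator_def power_mult_distrib)
  have "integrable lborel (\<lambda>x. f (0 + 2 * x))"
    using fi by (rule lborel_integrable_real_affine) simp
  then have "integrable lborel (\<lambda>x. (2 ^ k * (indicator {0<..} x * (x ^ k * F (2 * x)))) / 2 ^ k)"
    unfolding eq by (rule integrable_divide)
  then show si: "set_integrable lborel {0<..} (\<lambda>x. x ^ k * F (2 * x))"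
    unfolding set_integrable_def by simp
  have "integral\<^sup>L lborel f = \<bar>2\<bar> *\<^sub>R integral\<^sup>L lborel (\<lambda>x. f (0 + 2 * x))"
    by (rule lborel_integral_real_affine) simp
  also have "\<dots> = 2 * 2 ^ k * (LINT x:{0<..}|lborel. x ^ k * F (2 * x))"
    unfolding eq set_lebesgue_integral_def by simp
  finally show "(LINT x:{0<..}|lborel. x ^ k * F (2 * x)) = (LINT x:{0<..}|lborel. x ^ k * F x) / 2 ^ (k + 1)"
    unfolding f_def set_lebesgue_integral_def by (simp add: field_simps)
qed

lemma comb_deriv:
  fixes G :: "real \<Rightarrow> real"
  assumes dG: "\<forall>x>0. G differentiable (at x)" and x: "x > 0"
  shows "((\<lambda>x. a * G x + (1 - a) * 2 ^ d * G (2 * x)) has_real_derivative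
           (a * deriv G x + (1 - a) * 2 ^ d * (deriv G (2 * x) * 2))) (at x)"
proof -
  have g1: "(G has_real_derivative deriv G x) (at x)"
    using dG x DERIV_deriv_iff_real_differentiable by blast
  have g2: "(G has_real_derivative deriv G (2 * x)) (at (2 * x))"
    using dG x DERIV_deriv_iff_real_differentiable by simp
  have l: "((\<lambda>x::real. 2 * x) has_real_derivative 2) (at x)"
    using DERIV_cmult_Id by blast
  have g3: "((\<lambda>x. G (2 * x)) has_real_derivative deriv G (2 * x) * 2) (at x)"
    using DERIV_chain2[OF g2 l] .
  show ?thesis
    by (intro DERIV_add DERIV_cmult g1 g3)
qed

lemma V_pos:
  fixes G :: "real \<Rightarrow> real"
  assumes adm: "admissible d q G" and d1: "d \<ge> 1"
  shows "Vfun d G > 0"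
proof -
  have dG: "\<forall>x>0. G differentiable (at x)"
   and intV: "set_integrable lborel {0..} (\<lambda>x. x ^ (d - 1) * (deriv G x)\<^sup>2)"
   and int0: "set_integrable lborel {0..} (\<lambda>x. x ^ (d - 1 + 0) * G x)"
   and B0: "Bmom d 0 G = 1 / bconst d"
    using adm unfolding admissible_def by auto
  have Vge: "Vfun d G \<ge> 0"
    unfolding Vfun_def set_lebesgue_integral_def
    by (rule Bochner_Integration.integral_nonneg) (simp add: indicator_def)
  show ?thesis
  proof (rule ccontr)
    assume "\<not> Vfun d G > 0"
    then have V0: "Vfun d G = 0" using Vge by simp
    have "AE x in lborel. indicator {0..} x *\<^sub>R (x ^ (d - 1) * (deriv G x)\<^sup>2) = 0"
      using V0 intV unfolding Vfun_def set_lebesgue_integral_def set_integrable_def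
      by (subst integral_nonneg_eq_0_iff_AE[symmetric]) (auto simp: indicator_def)
    then have "AE x in lborel. x > 0 \<longrightarrow> deriv G x = 0"
      by eventually_elim (auto simp: indicator_def)
    then obtain N where N: "N \<in> null_sets lborel" "{x. \<not> (x > 0 \<longrightarrow> deriv G x = 0)} \<subseteq> N"
      by (rule AE_E) (auto simp: null_sets_def)
    have negN: "negligible N"
      using N(1) by (simp add: negligible_iff_null_sets null_sets_completionI)
    have const: "G b = G a" if ab: "0 < a" "a \<le> b" for a b
    proof -
      have "(deriv G has_integral (G b - G a)) {a..b}"
      proof (rule fundamental_theorem_of_calculus[OF ab(2)])
        fix x assume "x \<in> {a..b}"
        then have "x > 0" using ab by auto
        then have "(G has_real_derivative deriv G x) (at x)"
          using dG DERIV_deriv_iff_real_differentiable by blast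
        then show "(G has_vector_derivative deriv G x) (at x within {a..b})"
          by (simp add: has_real_derivative_iff_has_vector_derivative has_vector_derivative_at_within)
      qed
      moreover have "(deriv G has_integral 0) {a..b}"
      proof (rule has_integral_spike[OF negN])
        show "((\<lambda>_. 0) has_integral (0::real)) {a..b}" by simp
        fix x assume "x \<in> {a..b} - N"
        then have "x \<notin> N" "x > 0" using ab by auto
        then show "deriv G x = 0" using N(2) by auto
      qed
      ultimately have "G b - G a = 0" by (rule has_integral_unique)
      then show ?thesis by simp
    qed
    have Gc: "G x = G 1" if "x > 0" for x
    proof (cases "x \<le> 1")
      case True
      then show ?thesis using const[of x 1] that by simp
    next
      case False
      then show ?thesis using const[of 1 x] that by simp
    qed
    show False
    proof (cases "G 1 = 0")
      case False
      have "set_integrable lborel {1..} (\<lambda>x. x ^ (d - 1 + 0) * G x)"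
        by (rule set_integrable_subset[OF int0]) auto
      then have i1: "integrable lborel (\<lambda>x. indicator {1..} x *\<^sub>R (x ^ (d - 1 + 0) * G x))"
        unfolding set_integrable_def .
      have "integrable lborel (\<lambda>x::real. indicator {1..} x *\<^sub>R G 1)"
      proof (rule Bochner_Integration.integrable_bound[OF i1])
        show "(\<lambda>x::real. indicator {1..} x *\<^sub>R G 1) \<in> borel_measurable lborel" by measurable
        show "AE x in lborel. norm (indicator {1..} x *\<^sub>R G 1) \<le> norm (indicator {1..} x *\<^sub>R (x ^ (d - 1 + 0) * G x))"
        proof (rule AE_I2)
          fix x :: real
          show "norm (indicator {1..} x *\<^sub>R G 1) \<le> norm (indicator {1..} x *\<^sub>R (x ^ (d - 1 + 0) * G x))"
          proof (cases "x \<ge> 1")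
            case True
            then have "G x = G 1" using Gc[of x] by linarith
            moreover have "1 \<le> x ^ (d - 1)" using True by (simp add: one_le_power)
            ultimately show ?thesis using True
              by (simp add: abs_mult mult_le_cancel_right1)
          qed (simp add: indicator_def)
        qed
      qed
      then show False using const_not_int[OF False] unfolding set_integrable_def by simp
    next
      case True
      have "Bmom d 0 G = 0"
        unfolding Bmom_def set_lebesgue_integral_def
      proof (rule integral_eq_zero_AE)
        show "AE x in lborel. indicator {0..} x *\<^sub>R (x ^ (d - 1 + 0) * G x) = 0"
          using AE_lborel_singleton[of 0]
        proof eventually_elim
          fix x :: real assume "x \<noteq> 0"
          show "indicator {0..} x *\<^sub>R (x ^ (d - 1 + 0) * G x) = 0"
          proof (cases "x > 0")
            case True
            then show ?thesis using Gc[of x] \<open>G 1 = 0\<close> by simp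
          next
            case False
            then show ?thesis using \<open>x \<noteq> 0\<close> by (simp add: indicator_def)
          qed
        qed
      qed
      moreover have "bconst d \<noteq> 0"
      proof -
        have "real d / 2 > 0" using d1 by simp
        then have "Gamma (real d / 2) > 0" by (rule Gamma_real_pos)
        then show ?thesis by (simp add: bconst_def)
      qed
      ultimately show False using B0 by simp
    qed
  qed
qed

lemma comb_moment:
  fixes G :: "real \<Rightarrow> real" and k :: nat
  assumes i: "set_integrable lborel {0..} (\<lambda>x. x ^ k * G x)"
  shows "set_integrable lborel {0..} (\<lambda>x. x ^ k * (a * G x + (1 - a) * 2 ^ d * G (2 * x)))"
    and "(LINT x:{0..}|lborel. x ^ k * (a * G x + (1 - a) * 2 ^ d * G (2 * x)))
         = (a + (1 - a) * 2 ^ d / 2 ^ (k + 1)) * (LINT x:{0..}|lborel. x ^ k * G x)"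
proof -
  have i0: "set_integrable lborel {0<..} (\<lambda>x. x ^ k * G x)"
    using i open_closed_int(1) by blast
  note s = scale2[OF i0]
  have eqf: "(\<lambda>x. x ^ k * (a * G x + (1 - a) * 2 ^ d * G (2 * x)))
     = (\<lambda>x. a * (x ^ k * G x) + ((1 - a) * 2 ^ d) * (x ^ k * G (2 * x)))"
    by (simp add: algebra_simps)
  have si: "set_integrable lborel {0<..} (\<lambda>x. x ^ k * (a * G x + (1 - a) * 2 ^ d * G (2 * x)))"
    unfolding eqf using i0 s(1) by (intro set_integral_add set_integrable_mult_right)
  then show "set_integrable lborel {0..} (\<lambda>x. x ^ k * (a * G x + (1 - a) * 2 ^ d * G (2 * x)))"
    using open_closed_int(1) by blast
  have "(LINT x:{0..}|lborel. x ^ k * (a * G x + (1 - a) * 2 ^ d * G (2 * x)))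
     = (LINT x:{0<..}|lborel. x ^ k * (a * G x + (1 - a) * 2 ^ d * G (2 * x)))"
    by (rule open_closed_int(2))
  also have "\<dots> = a * (LINT x:{0<..}|lborel. x ^ k * G x) + ((1 - a) * 2 ^ d) * (LINT x:{0<..}|lborel. x ^ k * G (2 * x))"
    unfolding eqf using i0 s(1) by (simp add: set_integral_add)
  also have "\<dots> = (a + (1 - a) * 2 ^ d / 2 ^ (k + 1)) * (LINT x:{0<..}|lborel. x ^ k * G x)"
    unfolding s(2) by (simp add: field_simps)
  also have "\<dots> = (a + (1 - a) * 2 ^ d / 2 ^ (k + 1)) * (LINT x:{0..}|lborel. x ^ k * G x)"
    by (simp add: open_closed_int(2))
  finally show "(LINT x:{0..}|lborel. x ^ k * (a * G x + (1 - a) * 2 ^ d * G (2 * x)))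
         = (a + (1 - a) * 2 ^ d / 2 ^ (k + 1)) * (LINT x:{0..}|lborel. x ^ k * G x)" .
qed

lemma comb_V:
  fixes G :: "real \<Rightarrow> real" and a :: real
  assumes dG: "\<forall>x>0. G differentiable (at x)"
    and iV: "set_integrable lborel {0..} (\<lambda>x. x ^ (d - 1) * (deriv G x)\<^sup>2)"
    and d1: "d \<ge> 1"
  defines "H \<equiv> (\<lambda>x. a * G x + (1 - a) * 2 ^ d * G (2 * x))"
  shows "set_integrable lborel {0..} (\<lambda>x. x ^ (d - 1) * (deriv H x)\<^sup>2)"
    and "Vfun d H \<le> (2 * a\<^sup>2 + 2 * (1 - a)\<^sup>2 * 2 ^ (d + 2)) * Vfun d G"
proof -
  define D where "D = (\<lambda>x. indicator {0<..} x * deriv G x)"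
  have Dm[measurable]: "D \<in> borel_measurable borel"
    unfolding D_def by (rule deriv_meas[OF dG])
  define b where "b = (1 - a) * 2 ^ (d + 1)"
  have dH: "deriv H x = a * D x + b * D (2 * x)" if "x > 0" for x
  proof -
    have "deriv H x = a * deriv G x + (1 - a) * 2 ^ d * (deriv G (2 * x) * 2)"
      unfolding H_def by (rule DERIV_imp_deriv[OF comb_deriv[OF dG that]])
    then show ?thesis using that by (simp add: D_def b_def)
  qed
  have iV0: "set_integrable lborel {0<..} (\<lambda>x. x ^ (d - 1) * (D x)\<^sup>2)"
  proof -
    have "set_integrable lborel {0<..} (\<lambda>x. x ^ (d - 1) * (deriv G x)\<^sup>2)"
      using iV open_closed_int(1) by blast
    then show ?thesis
      by (rule set_integrable_cong[THEN iffD1, rotated -1]) (auto simp: D_def)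
  qed
  note s = scale2[OF iV0[unfolded power2_eq_square], folded power2_eq_square]
  define \<Phi> where "\<Phi> = (\<lambda>x. x ^ (d - 1) * (a * D x + b * D (2 * x))\<^sup>2)"
  define g where "g = (\<lambda>x. 2 * a\<^sup>2 * (x ^ (d - 1) * (D x)\<^sup>2) + 2 * b\<^sup>2 * (x ^ (d - 1) * (D (2 * x))\<^sup>2))"
  have gi: "set_integrable lborel {0<..} g"
    unfolding g_def using iV0 s(1) by (intro set_integral_add set_integrable_mult_right)
  have pb: "\<Phi> x \<le> g x" if "x > 0" for x
  proof -
    have "(a * D x + b * D (2 * x))\<^sup>2 \<le> 2 * (a * D x)\<^sup>2 + 2 * (b * D (2 * x))\<^sup>2"
      by (smt (verit) sum_squares_bound zero_le_power2 power2_sum)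
    then have "x ^ (d - 1) * (a * D x + b * D (2 * x))\<^sup>2 \<le> x ^ (d - 1) * (2 * (a * D x)\<^sup>2 + 2 * (b * D (2 * x))\<^sup>2)"
      using that by (intro mult_left_mono) auto
    then show ?thesis unfolding \<Phi>_def g_def by (simp add: algebra_simps power_mult_distrib)
  qed
  have \<Phi>nn: "\<Phi> x \<ge> 0" if "x > 0" for x
    unfolding \<Phi>_def using that by simp
  have \<Phi>i: "set_integrable lborel {0<..} \<Phi>"
  proof (rule set_integrable_bound[OF gi])
    show "set_borel_measurable lborel {0<..} \<Phi>"
      unfolding set_borel_measurable_def \<Phi>_def by measurable
    show "AE x in lborel. x \<in> {0<..} \<longrightarrow> norm (\<Phi> x) \<le> norm (g x)"
      using pb \<Phi>nn by (auto intro!: AE_I2) (smt (verit))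
  qed
  have cong: "set_integrable lborel {0<..} (\<lambda>x. x ^ (d - 1) * (deriv H x)\<^sup>2) \<longleftrightarrow> set_integrable lborel {0<..} \<Phi>"
    by (rule set_integrable_cong) (auto simp: \<Phi>_def dH)
  show "set_integrable lborel {0..} (\<lambda>x. x ^ (d - 1) * (deriv H x)\<^sup>2)"
    using \<Phi>i cong open_closed_int(1) by blast
  have "Vfun d H = (LINT x:{0<..}|lborel. \<Phi> x)"
    unfolding Vfun_def open_closed_int(2)
    by (rule set_lebesgue_integral_cong) (auto simp: \<Phi>_def dH)
  also have "\<dots> \<le> (LINT x:{0<..}|lborel. g x)"
    by (rule set_integral_mono[OF \<Phi>i gi]) (simp add: pb)
  also have "\<dots> = 2 * a\<^sup>2 * (LINT x:{0<..}|lborel. x ^ (d - 1) * (D x)\<^sup>2)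
      + 2 * b\<^sup>2 * (LINT x:{0<..}|lborel. x ^ (d - 1) * (D (2 * x))\<^sup>2)"
    unfolding g_def using iV0 s(1) by (simp add: set_integral_add)
  also have "(LINT x:{0<..}|lborel. x ^ (d - 1) * (D x)\<^sup>2) = Vfun d G"
    unfolding Vfun_def open_closed_int(2)
    by (rule set_lebesgue_integral_cong) (auto simp: D_def)
  also have "(LINT x:{0<..}|lborel. x ^ (d - 1) * (D (2 * x))\<^sup>2) = Vfun d G / 2 ^ d"
    using s(2) d1 \<open>_ = Vfun d G\<close> by simp
  also have "2 * a\<^sup>2 * Vfun d G + 2 * b\<^sup>2 * (Vfun d G / 2 ^ d)
       = (2 * a\<^sup>2 + 2 * (1 - a)\<^sup>2 * 2 ^ (d + 2)) * Vfun d G"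
  proof -
    have p: "((2::real) ^ (d + 1))\<^sup>2 = 2 ^ d * 2 ^ (d + 2)"
      by (simp add: power2_eq_square power_add)
    have "b\<^sup>2 = (1 - a)\<^sup>2 * (2 ^ d * 2 ^ (d + 2))"
      unfolding b_def power_mult_distrib p by simp
    then show ?thesis by (simp add: field_simps)
  qed
  finally show "Vfun d H \<le> (2 * a\<^sup>2 + 2 * (1 - a)\<^sup>2 * 2 ^ (d + 2)) * Vfun d G" .
qed

theorem proposition1:
  fixes d q :: nat
  assumes "d \<ge> 1" and "q \<ge> 2" and "even q"
  shows "\<not> (\<exists>G. admissible d q G \<and>
               (\<forall>H. admissible d q H \<longrightarrow> objective d q G \<le> objective d q H))"
proof
  assume "\<exists>G. admissible d q G \<and> (\<forall>H. admissible d q H \<longrightarrow> objective d q G \<le> objective d q H)"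
  then obtain G where adm: "admissible d q G"
    and minG: "\<And>H. admissible d q H \<Longrightarrow> objective d q G \<le> objective d q H" by blast
  have dG: "\<forall>x>0. G differentiable (at x)"
   and iV: "set_integrable lborel {0..} (\<lambda>x. x ^ (d - 1) * (deriv G x)\<^sup>2)"
   and iM: "\<And>i. i \<le> q \<Longrightarrow> even i \<Longrightarrow> set_integrable lborel {0..} (\<lambda>x. x ^ (d - 1 + i) * G x)"
   and B0: "Bmom d 0 G = 1 / bconst d"
   and Bz: "\<And>i. even i \<Longrightarrow> 2 \<le> i \<Longrightarrow> i \<le> q - 2 \<Longrightarrow> Bmom d i G = 0"
   and Bq: "Bmom d q G \<noteq> 0"
    using adm unfolding admissible_def by auto
  have Vp: "Vfun d G > 0" using V_pos[OF adm assms(1)] .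
  define V where "V = Vfun d G"
  define B where "B = Bmom d q G"
  define K :: real where "K = 2 + 8 * 2 ^ (d + 2)"
  define s :: real where "s = 1 / 2 ^ q"
  define c :: real where "c = 1 / (2 * K ^ q)"
  define a where "a = (c - s) / (1 - s)"
  define H where "H = (\<lambda>x. a * G x + (1 - a) * 2 ^ d * G (2 * x))"
  have K1: "K \<ge> 1" unfolding K_def by simp
  have Kq: "K ^ q \<ge> 1" using K1 by (simp add: one_le_power)
  have c0: "c > 0" and c2: "c \<le> 1/2" unfolding c_def using Kq by (auto simp: field_simps)
  have "(2::real) ^ q \<ge> 2 ^ 2" using assms(2) by (intro power_increasing) auto
  then have s0: "s > 0" and s4: "s \<le> 1/4" unfolding s_def by (auto simp: field_simps)
  have ns: "1 - s \<noteq> 0" using s4 by simp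
  have "a * (1 - s) = c - s" unfolding a_def using ns by simp
  then have ac: "a + (1 - a) * s = c" by (simp add: algebra_simps)
  have a_lo: "a \<ge> -1" and a_hi: "a \<le> 1"
    unfolding a_def using s0 s4 c0 c2 by (auto simp: field_simps)
  have coef: "a + (1 - a) * 2 ^ d / 2 ^ (d - 1 + i + 1) = a + (1 - a) / 2 ^ i" for i
  proof -
    have "d - 1 + i + 1 = d + i" using assms(1) by simp
    then show ?thesis by (simp add: power_add)
  qed
  have mom: "set_integrable lborel {0..} (\<lambda>x. x ^ (d - 1 + i) * H x) \<and>
             Bmom d i H = (a + (1 - a) / 2 ^ i) * Bmom d i G" if "i \<le> q" "even i" for i
    using comb_moment[OF iM[OF that], of a d] unfolding H_def Bmom_def coef by simp
  have Vb: "set_integrable lborel {0..} (\<lambda>x. x ^ (d - 1) * (deriv H x)\<^sup>2)"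
    and Vle: "Vfun d H \<le> (2 * a\<^sup>2 + 2 * (1 - a)\<^sup>2 * 2 ^ (d + 2)) * V"
    using comb_V[OF dG iV assms(1), of a] unfolding H_def V_def by auto
  have dH: "\<forall>x>0. H differentiable (at x)"
    using comb_deriv[OF dG] unfolding H_def by (meson real_differentiable_def)
  have BqH: "Bmom d q H = c * B"
    using mom[OF order_refl assms(3)] ac unfolding s_def B_def by simp
  have admH: "admissible d q H"
    unfolding admissible_def
  proof (intro conjI)
    show "\<forall>x>0. H differentiable (at x)" by (rule dH)
    show "set_integrable lborel {0..} (\<lambda>x. x ^ (d - 1) * (deriv H x)\<^sup>2)" by (rule Vb)
    show "\<forall>i\<le>q. even i \<longrightarrow> set_integrable lborel {0..} (\<lambda>x. x ^ (d - 1 + i) * H x)"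
      using mom by blast
    show "Bmom d 0 H = 1 / bconst d" using mom[of 0] B0 by simp
    show "\<forall>i. even i \<and> 2 \<le> i \<and> i \<le> q - 2 \<longrightarrow> Bmom d i H = 0"
    proof (intro allI impI)
      fix i assume "even i \<and> 2 \<le> i \<and> i \<le> q - 2"
      then have "i \<le> q" "even i" by auto
      then show "Bmom d i H = 0" using mom[of i] Bz[of i] \<open>even i \<and> 2 \<le> i \<and> i \<le> q - 2\<close> by simp
    qed
    show "Bmom d q H \<noteq> 0" using BqH c0 Bq unfolding B_def by simp
  qed
  have VH0: "Vfun d H \<ge> 0"
    unfolding Vfun_def set_lebesgue_integral_def
    by (rule Bochner_Integration.integral_nonneg) (simp add: indicator_def)
  have "2 * a\<^sup>2 + 2 * (1 - a)\<^sup>2 * 2 ^ (d + 2) \<le> K"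
  proof -
    have "a\<^sup>2 \<le> 1" using a_lo a_hi by (simp add: abs_le_iff abs_square_le_1)
    moreover have "(1 - a)\<^sup>2 \<le> 4"
    proof -
      have e: "(1 - a)\<^sup>2 - 4 = (-1 - a) * (3 - a)" by (simp add: power2_eq_square algebra_simps)
      have "(-1 - a) * (3 - a) \<le> 0" using a_lo a_hi by (intro mult_nonpos_nonneg) auto
      then show ?thesis using e by linarith
    qed
    moreover have "(1 - a)\<^sup>2 * 2 ^ (d + 2) \<le> 4 * (2::real) ^ (d + 2)"
      using \<open>(1 - a)\<^sup>2 \<le> 4\<close> by (intro mult_right_mono) auto
    ultimately show ?thesis unfolding K_def by linarith
  qed
  then have "(2 * a\<^sup>2 + 2 * (1 - a)\<^sup>2 * 2 ^ (d + 2)) * V \<le> K * V"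
    using Vp unfolding V_def by (intro mult_right_mono) auto
  then have VHle: "Vfun d H \<le> K * V" using Vle by linarith
  have b2: "Bmom d q G ^ (2 * (d + 2)) > 0"
  proof -
    have "Bmom d q G ^ 2 > 0" using Bq by simp
    then have "(Bmom d q G ^ 2) ^ (d + 2) > 0" by (rule zero_less_power)
    then show ?thesis by (simp only: power_mult)
  qed
  have m0: "objective d q G > 0"
    unfolding objective_def using Vp b2 by simp
  have Bp: "B ^ (2 * (d + 2)) \<ge> 0" using b2 unfolding B_def by simp
  have cp: "c ^ (2 * (d + 2)) \<ge> 0" using c0 by simp
  have KVp: "(K * V) ^ (2 * q) \<ge> 0" using K1 Vp unfolding V_def by simp
  have P1: "Vfun d H ^ (2 * q) \<le> (K * V) ^ (2 * q)" by (rule power_mono[OF VHle VH0])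
  have "objective d q H = (c * B) ^ (2 * (d + 2)) * Vfun d H ^ (2 * q)"
    unfolding objective_def BqH ..
  also have "\<dots> = (c ^ (2 * (d + 2)) * B ^ (2 * (d + 2))) * Vfun d H ^ (2 * q)"
    by (simp only: power_mult_distrib)
  also have "\<dots> \<le> (c ^ (2 * (d + 2)) * B ^ (2 * (d + 2))) * (K * V) ^ (2 * q)"
    by (rule mult_left_mono[OF P1]) (use Bp cp in simp)
  also have "\<dots> \<le> (c ^ 2 * B ^ (2 * (d + 2))) * (K * V) ^ (2 * q)"
  proof -
    have "c ^ (2 * (d + 2)) \<le> c ^ 2"
      using c0 c2 by (intro power_decreasing) auto
    then have "c ^ (2 * (d + 2)) * B ^ (2 * (d + 2)) \<le> c ^ 2 * B ^ (2 * (d + 2))"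
      by (rule mult_right_mono[OF _ Bp])
    then show ?thesis by (rule mult_right_mono[OF _ KVp])
  qed
  also have "\<dots> = (c * K ^ q) ^ 2 * objective d q G"
  proof -
    have k: "(K ^ q)\<^sup>2 = K ^ (2 * q)" by (metis power_mult mult.commute)
    have e: "(K * V) ^ (2 * q) = (K ^ q)\<^sup>2 * V ^ (2 * q)" unfolding k by (rule power_mult_distrib)
    show ?thesis unfolding objective_def B_def[symmetric] V_def[symmetric] e
      by (simp only: power_mult_distrib mult_ac)
  qed
  also have "(c * K ^ q) ^ 2 = 1 / 4"
    unfolding c_def using Kq K1 by (simp add: field_simps)
  finally have "objective d q H \<le> objective d q G / 4" by simp
  moreover have "objective d q G \<le> objective d q H" by (rule minG[OF admH])
  ultimately show False using m0 by simp
qed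

end
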